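(* Let $\bar n\ge1$ and let $\theta_2>0$ satisfy $\sin(\theta_2\sqrt n)\neq0$ for all $n\in\{1,\dots,9\bar n+8\}$. With $\Phi$ the Kraus map $\Phi(\rho)=M_g\rho M_g^\dagger+M_e\rho M_e^\dagger+M_m\rho M_m^\dagger$ ($M_g,M_e,M_m$ as in the context), the subspace $\mathcal{H}_0^{9\bar n+8}$ is invariant under $M_g,M_e,M_m$, and for every density operator $\rho_0$ supported in $\mathcal{H}_0^{9\bar n+8}$ the sequence $\rho_{k+1}=\Phi(\rho_k)$ converges to a density operator $\rho_\infty$ supported on $\mathrm{span}\{|\bar n\rangle,|9\bar n+8\rangle\}$.
   Context: Let $\mathcal{H}$ be the Hilbert space with orthonormal (Fock) basis $\{|n\rangle\}_{n\in\mathbb{N}}$ ($\mathbb{N}$ includes $0$). Let $\mathbf{a}=\sum_{n\ge1}\sqrt{n}\,|n-1\rangle\langle n|$, $\mathbf{a}^\dagger$ its adjoint, $\mathbf{N}=\mathbf{a}^\dagger\mathbf{a}=\sum_n n|n\rangle\langle n|$, $\mathbf{I}$ the identity, and for $h:\mathbb{N}\to\mathbb{C}$ write $h(\mathbf{N})=\sum_n h(n)|n\rangle\langle n|$. Let $\mathcal{H}_{n_1}^{n_2}=\mathrm{span}\{|n_1\rangle,\dots,|n_2\rangle\}$. Fix $\theta_1=\pi/\sqrt{\bar n+1}$, $\theta_2>0$ and an arbitrary real phase $\varphi$. Define $M_g=\mathbf{a}^\dagger\,\big(1+\cos\tfrac{\theta_2\sqrt{\mathbf{N}}}{2}\big)\,\frac{\sin(\theta_1\sqrt{\mathbf{N}+\mathbf{I}})}{2\sqrt{\mathbf{N}+\mathbf{I}}}$,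 $M_e=\cos^2\tfrac{\theta_1\sqrt{\mathbf{N}+\mathbf{I}}}{2}\,\cos\tfrac{\theta_2\sqrt{\mathbf{N}}}{2}-\sin^2\tfrac{\theta_1\sqrt{\mathbf{N}+\mathbf{I}}}{2}$, $M_m=e^{i\varphi}\,\mathbf{a}\,\frac{\sin(\theta_2\sqrt{\mathbf{N}}/2)}{\sqrt{\mathbf{N}}}\,\cos\tfrac{\theta_1\sqrt{\mathbf{N}+\mathbf{I}}}{2}$ (the value at $n=0$ of $\sin(\theta_2\sqrt{n}/2)/\sqrt{n}$ is irrelevant). *)

theory Defs
  imports "HOL-Analysis.Analysis"
begin

text \<open>Operators on the Fock space are represented by their matrix entries in the
Fock basis: an operator is a function op i k = <i|M|k>.\<close>

type_synonym fock_op = "nat \<Rightarrow> nat \<Rightarrow> complex"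

definition theta1 :: "nat \<Rightarrow> real" where
  "theta1 nbar = pi / sqrt (real nbar + 1)"

text \<open>M_g = a^dag (1 + cos(theta2 sqrt N / 2)) sin(theta1 sqrt(N+1)) / (2 sqrt(N+1)):
  M_g |k> = sqrt(k+1) f(k) |k+1>.\<close>
definition Mg :: "nat \<Rightarrow> real \<Rightarrow> fock_op" where
  "Mg nbar \<theta>2 i k =
     (if i = k + 1 then
        complex_of_real (sqrt (real k + 1) *
          ((1 + cos (\<theta>2 * sqrt (real k) / 2)) *
           (sin (theta1 nbar * sqrt (real k + 1)) / (2 * sqrt (real k + 1)))))
      else 0)"

definition Me :: "nat \<Rightarrow> real \<Rightarrow> fock_op" where
  "Me nbar \<theta>2 i k =
     (if i = k then
        complex_of_real ((cos (theta1 nbar * sqrt (real k + 1) / 2))\<^sup>2 * cos (\<theta>2 * sqrt (real k) / 2)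
                         - (sin (theta1 nbar * sqrt (real k + 1) / 2))\<^sup>2)
      else 0)"

text \<open>M_m = e^{i phi} a (sin(theta2 sqrt N/2)/sqrt N) cos(theta1 sqrt(N+1)/2):
  M_m |k> = e^{i phi} sqrt k g(k) |k-1> (zero for k = 0).\<close>
definition Mm :: "nat \<Rightarrow> real \<Rightarrow> real \<Rightarrow> fock_op" where
  "Mm nbar \<theta>2 \<phi> i k =
     (if k = i + 1 then
        cis \<phi> * complex_of_real (sqrt (real k) *
          ((sin (\<theta>2 * sqrt (real k) / 2) / sqrt (real k)) *
           cos (theta1 nbar * sqrt (real k + 1) / 2)))
      else 0)"

definition sandwich :: "fock_op \<Rightarrow> fock_op \<Rightarrow> fock_op" where
  "sandwich M \<rho> i j = (\<Sum>\<^sub>\<infinity>(k, l)\<in>UNIV. M i k * \<rho> k l * cnj (M j l))"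

definition Phi :: "nat \<Rightarrow> real \<Rightarrow> real \<Rightarrow> fock_op \<Rightarrow> fock_op" where
  "Phi nbar \<theta>2 \<phi> \<rho> i j =
     sandwich (Mg nbar \<theta>2) \<rho> i j + sandwich (Me nbar \<theta>2) \<rho> i j
     + sandwich (Mm nbar \<theta>2 \<phi>) \<rho> i j"

definition invariant_sub :: "nat \<Rightarrow> fock_op \<Rightarrow> bool" where
  "invariant_sub D M \<longleftrightarrow> (\<forall>i k. k \<le> D \<longrightarrow> D < i \<longrightarrow> M i k = 0)"

definition density_supported :: "nat set \<Rightarrow> fock_op \<Rightarrow> bool" where
  "density_supported S \<rho> \<longleftrightarrow>
     (\<forall>i j. (i \<notin> S \<or> j \<notin> S) \<longrightarrow> \<rho> i j = 0) \<and>
     (\<forall>i j. \<rho> j i = cnj (\<rho> i j)) \<and>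
     (\<forall>v :: nat \<Rightarrow> complex. 0 \<le> Re (\<Sum>i\<in>S. \<Sum>j\<in>S. cnj (v i) * \<rho> i j * v j)) \<and>
     (\<Sum>i\<in>S. \<rho> i i) = 1"

end

theory Submission
  imports Defs
begin


lemma infsum_point:
  fixes f :: "'a \<Rightarrow> complex"
  assumes "\<And>x. x \<noteq> a \<Longrightarrow> f x = 0"
  shows "infsum f UNIV = f a"
proof -
  have "infsum f UNIV = infsum f {a}"
    by (rule infsum_cong_neutral) (use assms in auto)
  then show ?thesis by simp
qed

definition Gc :: "nat \<Rightarrow> real \<Rightarrow> nat \<Rightarrow> real" where
  "Gc nbar \<theta>2 k = sqrt (real k + 1) *
          ((1 + cos (\<theta>2 * sqrt (real k) / 2)) *
           (sin (theta1 nbar * sqrt (real k + 1)) / (2 * sqrt (real k + 1))))"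
definition Ec :: "nat \<Rightarrow> real \<Rightarrow> nat \<Rightarrow> real" where
  "Ec nbar \<theta>2 k = (cos (theta1 nbar * sqrt (real k + 1) / 2))\<^sup>2 * cos (\<theta>2 * sqrt (real k) / 2)
                         - (sin (theta1 nbar * sqrt (real k + 1) / 2))\<^sup>2"
definition Nc :: "nat \<Rightarrow> real \<Rightarrow> nat \<Rightarrow> real" where
  "Nc nbar \<theta>2 k = sqrt (real k) *
          ((sin (\<theta>2 * sqrt (real k) / 2) / sqrt (real k)) *
           cos (theta1 nbar * sqrt (real k + 1) / 2))"

lemma sand_Mg: "sandwich (Mg nbar \<theta>2) \<rho> i j =
   (if 0 < i \<and> 0 < j then complex_of_real (Gc nbar \<theta>2 (i-1)) * \<rho> (i-1) (j-1) * complex_of_real (Gc nbar \<theta>2 (j-1)) else 0)"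
proof (cases "0 < i \<and> 0 < j")
  case True
  have "sandwich (Mg nbar \<theta>2) \<rho> i j = (\<lambda>(k,l). Mg nbar \<theta>2 i k * \<rho> k l * cnj (Mg nbar \<theta>2 j l)) (i-1, j-1)"
    unfolding sandwich_def by (rule infsum_point) (auto simp: Mg_def split: if_splits)
  then show ?thesis using True by (simp add: Mg_def Gc_def)
next
  case False
  then show ?thesis unfolding sandwich_def by (subst infsum_0) (auto simp: Mg_def)
qed

lemma sand_Me: "sandwich (Me nbar \<theta>2) \<rho> i j =
   complex_of_real (Ec nbar \<theta>2 i) * \<rho> i j * complex_of_real (Ec nbar \<theta>2 j)"
proof -
  have "sandwich (Me nbar \<theta>2) \<rho> i j = (\<lambda>(k,l). Me nbar \<theta>2 i k * \<rho> k l * cnj (Me nbar \<theta>2 j l)) (i, j)"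
    unfolding sandwich_def by (rule infsum_point) (auto simp: Me_def split: if_splits)
  then show ?thesis by (simp add: Me_def Ec_def)
qed

lemma sand_Mm: "sandwich (Mm nbar \<theta>2 \<phi>) \<rho> i j =
   complex_of_real (Nc nbar \<theta>2 (i+1)) * \<rho> (i+1) (j+1) * complex_of_real (Nc nbar \<theta>2 (j+1))"
proof -
  have "sandwich (Mm nbar \<theta>2 \<phi>) \<rho> i j = (\<lambda>(k,l). Mm nbar \<theta>2 \<phi> i k * \<rho> k l * cnj (Mm nbar \<theta>2 \<phi> j l)) (i+1, j+1)"
    unfolding sandwich_def by (rule infsum_point) (auto simp: Mm_def split: if_splits)
  also have "\<dots> = cis \<phi> * cnj (cis \<phi>) * (complex_of_real (Nc nbar \<theta>2 (i+1)) * \<rho> (i+1) (j+1) * complex_of_real (Nc nbar \<theta>2 (j+1)))"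
    by (simp add: Mm_def Nc_def algebra_simps)
  also have "cis \<phi> * cnj (cis \<phi>) = 1" by (simp add: cis_cnj cis_mult)
  finally show ?thesis by simp
qed

lemma Phi_eq: "Phi nbar \<theta>2 \<phi> \<rho> i j =
   (if 0 < i \<and> 0 < j then complex_of_real (Gc nbar \<theta>2 (i-1)) * \<rho> (i-1) (j-1) * complex_of_real (Gc nbar \<theta>2 (j-1)) else 0)
 + complex_of_real (Ec nbar \<theta>2 i) * \<rho> i j * complex_of_real (Ec nbar \<theta>2 j)
 + complex_of_real (Nc nbar \<theta>2 (i+1)) * \<rho> (i+1) (j+1) * complex_of_real (Nc nbar \<theta>2 (j+1))"
  unfolding Phi_def sand_Mg sand_Me sand_Mm ..

lemma Gc_eq: "Gc nbar \<theta>2 k = (1 + cos (\<theta>2 * sqrt (real k) / 2)) * sin (theta1 nbar * sqrt (real k + 1)) / 2"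
proof -
  have "sqrt (real k + 1) > 0" by simp
  then show ?thesis unfolding Gc_def by (simp add: field_simps)
qed

lemma Nc_eq: "Nc nbar \<theta>2 k = sin (\<theta>2 * sqrt (real k) / 2) * cos (theta1 nbar * sqrt (real k + 1) / 2)"
  unfolding Nc_def by (cases "k = 0") auto

lemma sum_sq_one: "(Gc nbar \<theta>2 k)\<^sup>2 + (Ec nbar \<theta>2 k)\<^sup>2 + (Nc nbar \<theta>2 k)\<^sup>2 = 1"
proof -
  define a where "a = \<theta>2 * sqrt (real k) / 2"
  define b where "b = theta1 nbar * sqrt (real k + 1) / 2"
  have h: "theta1 nbar * sqrt (real k + 1) = 2 * b" by (simp add: b_def)
  have e1: "(sin a)\<^sup>2 = 1 - (cos a)\<^sup>2" by (simp add: sin_squared_eq)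
  have e2: "(sin b)\<^sup>2 = 1 - (cos b)\<^sup>2" by (simp add: sin_squared_eq)
  have "(Gc nbar \<theta>2 k)\<^sup>2 + (Ec nbar \<theta>2 k)\<^sup>2 + (Nc nbar \<theta>2 k)\<^sup>2
     = ((1 + cos a) * (2 * sin b * cos b) / 2)\<^sup>2 + ((cos b)\<^sup>2 * cos a - (sin b)\<^sup>2)\<^sup>2 + (sin a * cos b)\<^sup>2"
    unfolding Gc_eq Nc_eq Ec_def h sin_double by (simp add: a_def b_def)
  also have "\<dots> = 1"
    using e1 e2 by algebra
  finally show ?thesis .
qed



lemma sandwich_fin:
  assumes "finite S" and supp: "\<And>k l. k \<notin> S \<or> l \<notin> S \<Longrightarrow> \<rho> k l = 0"
  shows "sandwich M \<rho> i j = (\<Sum>k\<in>S. \<Sum>l\<in>S. M i k * \<rho> k l * cnj (M j l))"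
proof -
  have "sandwich M \<rho> i j = infsum (\<lambda>(k,l). M i k * \<rho> k l * cnj (M j l)) (S \<times> S)"
    unfolding sandwich_def apply (rule infsum_cong_neutral) using supp by force+
  also have "\<dots> = (\<Sum>(k,l)\<in>S \<times> S. M i k * \<rho> k l * cnj (M j l))"
    using assms(1) by simp
  also have "\<dots> = (\<Sum>k\<in>S. \<Sum>l\<in>S. M i k * \<rho> k l * cnj (M j l))"
    by (rule sum.cartesian_product[symmetric])
  finally show ?thesis .
qed

lemma quad_sandwich:
  assumes "finite S" and supp: "\<And>k l. k \<notin> S \<or> l \<notin> S \<Longrightarrow> \<rho> k l = 0"
  shows "(\<Sum>i\<in>S. \<Sum>j\<in>S. cnj (v i) * sandwich M \<rho> i j * v j)
       = (\<Sum>k\<in>S. \<Sum>l\<in>S. cnj (\<Sum>i\<in>S. v i * cnj (M i k)) * \<rho> k l * (\<Sum>j\<in>S. v j * cnj (M j l)))"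
proof -
  have sf: "\<And>i j. sandwich M \<rho> i j = (\<Sum>k\<in>S. \<Sum>l\<in>S. M i k * \<rho> k l * cnj (M j l))"
    by (rule sandwich_fin[OF assms])
  have "(\<Sum>i\<in>S. \<Sum>j\<in>S. cnj (v i) * sandwich M \<rho> i j * v j)
      = (\<Sum>i\<in>S. \<Sum>j\<in>S. \<Sum>k\<in>S. \<Sum>l\<in>S. (cnj (v i) * M i k) * \<rho> k l * (v j * cnj (M j l)))"
    unfolding sf
    apply (simp only: sum_distrib_left sum_distrib_right)
    apply (intro sum.cong refl)
    by (simp only: mult_ac)
  also have "\<dots> = (\<Sum>k\<in>S. \<Sum>l\<in>S. \<Sum>i\<in>S. \<Sum>j\<in>S. (cnj (v i) * M i k) * \<rho> k l * (v j * cnj (M j l)))"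
    (is "?A = _")
  proof -
    have "?A = (\<Sum>i\<in>S. \<Sum>k\<in>S. \<Sum>j\<in>S. \<Sum>l\<in>S. (cnj (v i) * M i k) * \<rho> k l * (v j * cnj (M j l)))" by (rule sum.cong[OF refl]) (rule sum.swap)
    also have "\<dots> = (\<Sum>k\<in>S. \<Sum>i\<in>S. \<Sum>j\<in>S. \<Sum>l\<in>S. (cnj (v i) * M i k) * \<rho> k l * (v j * cnj (M j l)))" by (rule sum.swap)
    also have "\<dots> = (\<Sum>k\<in>S. \<Sum>i\<in>S. \<Sum>l\<in>S. \<Sum>j\<in>S. (cnj (v i) * M i k) * \<rho> k l * (v j * cnj (M j l)))" by (rule sum.cong[OF refl], rule sum.cong[OF refl]) (rule sum.swap)
    also have "\<dots> = (\<Sum>k\<in>S. \<Sum>l\<in>S. \<Sum>i\<in>S. \<Sum>j\<in>S. (cnj (v i) * M i k) * \<rho> k l * (v j * cnj (M j l)))" by (rule sum.cong[OF refl]) (rule sum.swap)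
    finally show ?thesis .
  qed
  also have "\<dots> = (\<Sum>k\<in>S. \<Sum>l\<in>S. (\<Sum>i\<in>S. cnj (v i) * M i k) * \<rho> k l * (\<Sum>j\<in>S. v j * cnj (M j l)))"
    apply (simp only: sum_distrib_left sum_distrib_right)
    apply (rule sum.cong[OF refl], rule sum.cong[OF refl])
    by (rule sum.swap)
  also have "\<dots> = (\<Sum>k\<in>S. \<Sum>l\<in>S. cnj (\<Sum>i\<in>S. v i * cnj (M i k)) * \<rho> k l * (\<Sum>j\<in>S. v j * cnj (M j l)))"
    by simp
  finally show ?thesis .
qed

lemma psd_sandwich:
  assumes "finite S" and supp: "\<And>k l. k \<notin> S \<or> l \<notin> S \<Longrightarrow> \<rho> k l = 0"
    and psd: "\<forall>v :: nat \<Rightarrow> complex. 0 \<le> Re (\<Sum>i\<in>S. \<Sum>j\<in>S. cnj (v i) * \<rho> i j * v j)"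
  shows "0 \<le> Re (\<Sum>i\<in>S. \<Sum>j\<in>S. cnj (v i) * sandwich M \<rho> i j * v j)"
proof -
  have eq: "(\<Sum>i\<in>S. \<Sum>j\<in>S. cnj (v i) * sandwich M \<rho> i j * v j)
       = (\<Sum>k\<in>S. \<Sum>l\<in>S. cnj (\<Sum>i\<in>S. v i * cnj (M i k)) * \<rho> k l * (\<Sum>j\<in>S. v j * cnj (M j l)))"
    by (rule quad_sandwich[OF assms(1,2)])
  define w where "w k = (\<Sum>i\<in>S. v i * cnj (M i k))" for k
  have "0 \<le> Re (\<Sum>k\<in>S. \<Sum>l\<in>S. cnj (w k) * \<rho> k l * w l)" using psd by blast
  then show ?thesis unfolding eq w_def .
qed



lemma Phi_density:
  fixes D :: nat
  assumes GD: "Gc nbar \<theta>2 D = 0" and dens: "density_supported {..D} \<rho>"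
  shows "density_supported {..D} (Phi nbar \<theta>2 \<phi> \<rho>)"
proof -
  let ?G = "Gc nbar \<theta>2" and ?E = "Ec nbar \<theta>2" and ?N = "Nc nbar \<theta>2"
  have supp: "\<And>i j. i \<notin> {..D} \<or> j \<notin> {..D} \<Longrightarrow> \<rho> i j = 0"
   and herm: "\<And>i j. \<rho> j i = cnj (\<rho> i j)"
   and psd: "\<forall>v :: nat \<Rightarrow> complex. 0 \<le> Re (\<Sum>i\<in>{..D}. \<Sum>j\<in>{..D}. cnj (v i) * \<rho> i j * v j)"
   and tr: "(\<Sum>i\<in>{..D}. \<rho> i i) = 1"
    using dens unfolding density_supported_def by blast+
  have A: "\<forall>i j. (i \<notin> {..D} \<or> j \<notin> {..D}) \<longrightarrow> Phi nbar \<theta>2 \<phi> \<rho> i j = 0"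
  proof (intro allI impI)
    fix i j assume ij: "i \<notin> {..D} \<or> j \<notin> {..D}"
    have 1: "(if 0 < i \<and> 0 < j then complex_of_real (?G (i-1)) * \<rho> (i-1) (j-1) * complex_of_real (?G (j-1)) else 0) = 0"
    proof (cases "i - 1 \<notin> {..D} \<or> j - 1 \<notin> {..D}")
      case True then show ?thesis using supp by auto
    next
      case False
      then have "(0 < i \<and> i - 1 = D) \<or> (0 < j \<and> j - 1 = D) \<or> \<not> (0 < i \<and> 0 < j)" using ij by auto
      then show ?thesis using GD by auto
    qed
    have 2: "\<rho> i j = 0" using supp ij by blast
    have 3: "\<rho> (i+1) (j+1) = 0" using supp ij by auto
    show "Phi nbar \<theta>2 \<phi> \<rho> i j = 0" unfolding Phi_eq 1 2 3 by simp
  qed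
  have B: "\<forall>i j. Phi nbar \<theta>2 \<phi> \<rho> j i = cnj (Phi nbar \<theta>2 \<phi> \<rho> i j)"
  proof (intro allI)
    fix i j
    show "Phi nbar \<theta>2 \<phi> \<rho> j i = cnj (Phi nbar \<theta>2 \<phi> \<rho> i j)"
      unfolding Phi_eq herm[of "i-1" "j-1"] herm[of i j] herm[of "i+1" "j+1"]
      by (simp add: mult_ac)
  qed
  have C: "\<forall>v :: nat \<Rightarrow> complex. 0 \<le> Re (\<Sum>i\<in>{..D}. \<Sum>j\<in>{..D}. cnj (v i) * Phi nbar \<theta>2 \<phi> \<rho> i j * v j)"
  proof
    fix v :: "nat \<Rightarrow> complex"
    have eq: "(\<Sum>i\<in>{..D}. \<Sum>j\<in>{..D}. cnj (v i) * Phi nbar \<theta>2 \<phi> \<rho> i j * v j)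
      = (\<Sum>i\<in>{..D}. \<Sum>j\<in>{..D}. cnj (v i) * sandwich (Mg nbar \<theta>2) \<rho> i j * v j)
      + (\<Sum>i\<in>{..D}. \<Sum>j\<in>{..D}. cnj (v i) * sandwich (Me nbar \<theta>2) \<rho> i j * v j)
      + (\<Sum>i\<in>{..D}. \<Sum>j\<in>{..D}. cnj (v i) * sandwich (Mm nbar \<theta>2 \<phi>) \<rho> i j * v j)"
      unfolding Phi_def by (simp add: sum.distrib algebra_simps)
    have f: "finite {..D}" by simp
    show "0 \<le> Re (\<Sum>i\<in>{..D}. \<Sum>j\<in>{..D}. cnj (v i) * Phi nbar \<theta>2 \<phi> \<rho> i j * v j)"
      unfolding eq using psd_sandwich[OF f supp psd, of v] by simp
  qed
  have D: "(\<Sum>i\<in>{..D}. Phi nbar \<theta>2 \<phi> \<rho> i i) = 1"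
  proof -
    define g where "g i = complex_of_real (?G i) * \<rho> i i * complex_of_real (?G i)" for i
    define e where "e i = complex_of_real (?E i) * \<rho> i i * complex_of_real (?E i)" for i
    define n where "n i = complex_of_real (?N i) * \<rho> i i * complex_of_real (?N i)" for i
    have pe: "Phi nbar \<theta>2 \<phi> \<rho> i i = (if 0 < i then g (i - 1) else 0) + e i + n (Suc i)" for i
      unfolding Phi_eq g_def e_def n_def by simp
    have s1: "(\<Sum>i\<in>{..D}. (if 0 < i then g (i - 1) else 0)) = (\<Sum>i\<in>{..D}. g i)"
    proof -
      have "(\<Sum>i\<in>{..D}. (if 0 < i then g (i - 1) else 0)) = (\<Sum>i\<in>{..<D}. g i)"
        by (subst sum.atMost_shift) simp
      also have "\<dots> = (\<Sum>i\<in>{..D}. g i)"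
        using GD by (simp add: lessThan_Suc_atMost[symmetric] g_def)
      finally show ?thesis .
    qed
    have s3: "(\<Sum>i\<in>{..D}. n (Suc i)) = (\<Sum>i\<in>{..D}. n i)"
    proof -
      have n0: "n 0 = 0" by (simp add: n_def Nc_eq)
      have nD: "n (Suc D) = 0" using supp by (simp add: n_def)
      have "(\<Sum>i\<in>{..Suc D}. n i) = n 0 + (\<Sum>i\<in>{..D}. n (Suc i))"
        by (rule sum.atMost_Suc_shift)
      then show ?thesis using n0 nD by simp
    qed
    have "(\<Sum>i\<in>{..D}. Phi nbar \<theta>2 \<phi> \<rho> i i) = (\<Sum>i\<in>{..D}. g i + e i + n i)"
      unfolding pe sum.distrib s1 s3 ..
    also have "\<dots> = (\<Sum>i\<in>{..D}. \<rho> i i)"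
    proof (rule sum.cong[OF refl])
      fix i
      have "g i + e i + n i = complex_of_real ((?G i)\<^sup>2 + (?E i)\<^sup>2 + (?N i)\<^sup>2) * \<rho> i i"
        by (simp add: g_def e_def n_def power2_eq_square algebra_simps)
      then show "g i + e i + n i = \<rho> i i" by (simp add: sum_sq_one)
    qed
    finally show ?thesis using tr by simp
  qed
  show ?thesis unfolding density_supported_def using A B C D by blast
qed



lemma theta1_mul: "theta1 n * sqrt x = pi * (sqrt x / sqrt (real n + 1))"
  unfolding theta1_def by simp

lemma theta1_n: "theta1 n * sqrt (real n + 1) = pi"
proof -
  have "sqrt (real n + 1) > 0" by simp
  then show ?thesis unfolding theta1_mul by simp
qed

lemma sqrt9: "sqrt (9 * x) = 3 * sqrt x"
proof -
  have "sqrt 9 = 3" by (rule real_sqrt_unique) auto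
  then show ?thesis by (simp add: real_sqrt_mult)
qed

lemma sqrt4: "sqrt (4 * x) = 2 * sqrt x"
proof -
  have "sqrt 4 = 2" by (rule real_sqrt_unique) auto
  then show ?thesis by (simp add: real_sqrt_mult)
qed

lemma sqrtD: "sqrt (real (9 * n + 8) + 1) = 3 * sqrt (real n + 1)"
proof -
  have "real (9 * n + 8) + 1 = 9 * (real n + 1)" by simp
  then show ?thesis by (simp only: sqrt9)
qed

lemma theta1_D: "theta1 n * sqrt (real (9 * n + 8) + 1) = 3 * pi"
  unfolding sqrtD using theta1_n[of n] by (simp add: algebra_simps)

lemma half_lemma:
  fixes y :: real
  assumes "sin (2 * y) \<noteq> 0"
  shows "1 + cos y \<noteq> 0" "sin y \<noteq> 0"
proof -
  show "sin y \<noteq> 0" using assms by (auto simp: sin_double)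
  show "1 + cos y \<noteq> 0"
  proof
    assume "1 + cos y = 0"
    then have "cos y = -1" by simp
    then have "sin y = 0" using sin_cos_squared_add[of y] by (simp add: power2_eq_square)
    then show False using assms by (simp add: sin_double)
  qed
qed

lemma hyp_use:
  assumes H: "\<forall>m\<in>{1..D}. sin (\<theta>2 * sqrt (real m)) \<noteq> 0" and "t \<le> D"
  shows "1 + cos (\<theta>2 * sqrt (real t) / 2) \<noteq> 0"
    "1 \<le> t \<Longrightarrow> sin (\<theta>2 * sqrt (real t) / 2) \<noteq> 0"
proof -
  show "1 + cos (\<theta>2 * sqrt (real t) / 2) \<noteq> 0"
  proof (cases "t = 0")
    case True then show ?thesis by simp
  next
    case False
    then have "sin (2 * (\<theta>2 * sqrt (real t) / 2)) \<noteq> 0" using H assms(2) by auto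
    then show ?thesis by (rule half_lemma)
  qed
  assume "1 \<le> t"
  then have "sin (2 * (\<theta>2 * sqrt (real t) / 2)) \<noteq> 0" using H assms(2) by auto
  then show "sin (\<theta>2 * sqrt (real t) / 2) \<noteq> 0" by (rule half_lemma)
qed

lemma Gc_D: "Gc n \<theta>2 (9 * n + 8) = 0"
proof -
  have "sin (3 * pi) = 0" using sin_npi[of 3] by simp
  then show ?thesis unfolding Gc_eq theta1_D by simp
qed

lemma Ec_n: "Ec n \<theta>2 n = -1"
  unfolding Ec_def theta1_n by simp

lemma Ec_D: "Ec n \<theta>2 (9 * n + 8) = -1"
proof -
  have e: "3 * pi / 2 = pi + pi / 2" by simp
  have c0: "cos (pi + pi / 2) = 0" unfolding cos_add by simp
  have s0: "sin (pi + pi / 2) = -1" unfolding sin_add by simp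
  have c: "cos (3 * pi / 2) = 0" unfolding e by (rule c0)
  have s: "sin (3 * pi / 2) = -1" unfolding e by (rule s0)
  show ?thesis unfolding Ec_def theta1_D c s by simp
qed

lemma Gc_below:
  assumes H: "\<forall>m\<in>{1..9*n+8}. sin (\<theta>2 * sqrt (real m)) \<noteq> 0" and "t < n"
  shows "Gc n \<theta>2 t \<noteq> 0"
proof -
  define r where "r = sqrt (real t + 1) / sqrt (real n + 1)"
  have th: "theta1 n * sqrt (real t + 1) = pi * r" unfolding r_def theta1_mul ..
  have q: "r < 1" "0 < r"
    using assms(2) by (simp_all add: divide_less_eq r_def)
  have "0 < pi * r" using q by simp
  moreover have "pi * r < pi * 1" using q by (intro mult_strict_left_mono) auto
  ultimately have "sin (theta1 n * sqrt (real t + 1)) > 0" unfolding th by (intro sin_gt_zero) auto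
  moreover have "1 + cos (\<theta>2 * sqrt (real t) / 2) \<noteq> 0" using hyp_use(1)[OF H] assms(2) by simp
  ultimately show ?thesis unfolding Gc_eq by simp
qed

lemma Gc_Dm1:
  assumes H: "\<forall>m\<in>{1..9*n+8}. sin (\<theta>2 * sqrt (real m)) \<noteq> 0"
  shows "Gc n \<theta>2 (9 * n + 7) \<noteq> 0"
proof -
  let ?r = "sqrt (real (9 * n + 7) + 1) / sqrt (real n + 1)"
  have a: "sqrt (real (9 * n + 7) + 1) < 3 * sqrt (real n + 1)"
  proof -
    have "sqrt (real (9 * n + 7) + 1) < sqrt (9 * (real n + 1))" by simp
    also have "\<dots> = 3 * sqrt (real n + 1)" by (rule sqrt9)
    finally show ?thesis .
  qed
  have b: "2 * sqrt (real n + 1) < sqrt (real (9 * n + 7) + 1)"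
  proof -
    have "2 * sqrt (real n + 1) = sqrt (4 * (real n + 1))" by (rule sqrt4[symmetric])
    also have "\<dots> < sqrt (real (9 * n + 7) + 1)" by simp
    finally show ?thesis .
  qed
  have p: "sqrt (real n + 1) > 0" by simp
  have r1: "?r < 3" using a p by (simp add: divide_less_eq)
  have r2: "2 < ?r" using b p by (simp add: less_divide_eq)
  have m1: "pi * 2 < pi * ?r" using r2 by (intro mult_strict_left_mono) auto
  have m2: "pi * ?r < pi * 3" using r1 by (intro mult_strict_left_mono) auto
  have "sin (pi * ?r - 2 * pi) > 0"
    using m1 m2 by (intro sin_gt_zero) linarith+
  moreover have "sin (pi * ?r - 2 * pi) = sin (pi * ?r)"
    by (simp add: sin_diff)
  ultimately have "sin (theta1 n * sqrt (real (9 * n + 7) + 1)) \<noteq> 0" unfolding theta1_mul by simp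
  moreover have "1 + cos (\<theta>2 * sqrt (real (9*n+7)) / 2) \<noteq> 0" using hyp_use(1)[OF H, of "9*n+7"] by simp
  ultimately show ?thesis unfolding Gc_eq by simp
qed

lemma Nc_between:
  assumes H: "\<forall>m\<in>{1..9*n+8}. sin (\<theta>2 * sqrt (real m)) \<noteq> 0" and "n < t" "t < 9 * n + 8"
  shows "Nc n \<theta>2 t \<noteq> 0"
proof -
  let ?r = "sqrt (real t + 1) / sqrt (real n + 1)"
  have p: "sqrt (real n + 1) > 0" by simp
  have a: "sqrt (real t + 1) < 3 * sqrt (real n + 1)"
  proof -
    have "sqrt (real t + 1) < sqrt (9 * (real n + 1))" using assms(3) by simp
    also have "\<dots> = 3 * sqrt (real n + 1)" by (rule sqrt9)
    finally show ?thesis .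
  qed
  have b: "sqrt (real n + 1) < sqrt (real t + 1)" using assms(2) by simp
  have r1: "?r < 3" using a p by (simp add: divide_less_eq)
  have r2: "1 < ?r" using b p by (simp add: less_divide_eq)
  have m1: "pi * 1 < pi * ?r" using r2 by (intro mult_strict_left_mono) auto
  have m2: "pi * ?r < pi * 3" using r1 by (intro mult_strict_left_mono) auto
  define X where "X = pi * ?r"
  have "cos (X / 2 - pi) > 0"
    using m1 m2 unfolding X_def[symmetric] by (intro cos_gt_zero_pi) linarith+
  then have "cos (pi * ?r / 2 - pi) > 0" unfolding X_def .
  moreover have "cos (pi * ?r / 2 - pi) = - cos (pi * ?r / 2)"
    by (simp add: cos_diff)
  ultimately have "cos (theta1 n * sqrt (real t + 1) / 2) \<noteq> 0" unfolding theta1_mul by simp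
  moreover have "sin (\<theta>2 * sqrt (real t) / 2) \<noteq> 0" using hyp_use(2)[OF H] assms by simp
  ultimately show ?thesis unfolding Nc_eq by simp
qed



lemma sum_two:
  fixes f :: "nat \<Rightarrow> 'b::comm_monoid_add"
  assumes "finite S" "a \<in> S" "b \<in> S" "a \<noteq> b" "\<And>i. i \<in> S \<Longrightarrow> i \<noteq> a \<Longrightarrow> i \<noteq> b \<Longrightarrow> f i = 0"
  shows "sum f S = f a + f b"
proof -
  have "sum f S = sum f {a, b}"
    by (rule sum.mono_neutral_right) (use assms in auto)
  then show ?thesis using assms(4) by simp
qed

lemma sum_one:
  fixes f :: "nat \<Rightarrow> 'b::comm_monoid_add"
  assumes "finite S" "a \<in> S" "\<And>i. i \<in> S \<Longrightarrow> i \<noteq> a \<Longrightarrow> f i = 0"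
  shows "sum f S = f a"
proof -
  have "sum f S = sum f {a}"
    by (rule sum.mono_neutral_right) (use assms in auto)
  then show ?thesis by simp
qed

context
  fixes S :: "nat set" and \<rho> :: fock_op
  assumes fin: "finite S" and dens: "density_supported S \<rho>"
begin

lemma ds_supp: "i \<notin> S \<or> j \<notin> S \<Longrightarrow> \<rho> i j = 0"
  using dens unfolding density_supported_def by blast
lemma ds_herm: "\<rho> j i = cnj (\<rho> i j)"
  using dens unfolding density_supported_def by blast
lemma ds_psd: "0 \<le> Re (\<Sum>i\<in>S. \<Sum>j\<in>S. cnj (v i) * \<rho> i j * v j)"
  using dens unfolding density_supported_def by blast
lemma ds_tr: "(\<Sum>i\<in>S. \<rho> i i) = 1"
  using dens unfolding density_supported_def by blast

lemma ds_diag_real: "\<rho> t t = complex_of_real (Re (\<rho> t t))"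
proof -
  have "\<rho> t t = cnj (\<rho> t t)" by (rule ds_herm)
  then have "Im (\<rho> t t) = 0" by (metis cnj.sel(2) neg_equal_zero)
  then show ?thesis by (simp add: complex_eq_iff)
qed

lemma ds_diag_nonneg: "0 \<le> Re (\<rho> t t)"
proof (cases "t \<in> S")
  case False then show ?thesis using ds_supp by simp
next
  case True
  define v :: "nat \<Rightarrow> complex" where "v i = (if i = t then 1 else 0)" for i
  have "(\<Sum>i\<in>S. \<Sum>j\<in>S. cnj (v i) * \<rho> i j * v j) = (\<Sum>j\<in>S. cnj (v t) * \<rho> t j * v j)"
    by (rule sum_one[OF fin True]) (simp add: v_def)
  also have "\<dots> = cnj (v t) * \<rho> t t * v t"
    by (rule sum_one[OF fin True]) (simp add: v_def)
  also have "\<dots> = \<rho> t t" by (simp add: v_def)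
  finally show ?thesis using ds_psd[of v] by simp
qed

lemma ds_diag_le1: "Re (\<rho> t t) \<le> 1"
proof (cases "t \<in> S")
  case False then show ?thesis using ds_supp by simp
next
  case True
  have "(\<Sum>i\<in>S. Re (\<rho> i i)) = 1" using ds_tr by (metis Re_sum one_complex.sel(1))
  moreover have "Re (\<rho> t t) \<le> (\<Sum>i\<in>S. Re (\<rho> i i))"
    by (rule member_le_sum) (use True fin ds_diag_nonneg in auto)
  ultimately show ?thesis by simp
qed

lemma ds_offdiag: "(cmod (\<rho> a b))\<^sup>2 \<le> Re (\<rho> a a) * Re (\<rho> b b)"
proof -
  consider "a \<notin> S \<or> b \<notin> S" | "a = b" | "a \<in> S" "b \<in> S" "a \<noteq> b" by blast
  then show ?thesis
  proof cases
    case 1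
    then show ?thesis using ds_supp ds_diag_nonneg by (simp add: ds_supp)
  next
    case 2
    have "cmod (\<rho> a a) = \<bar>Re (\<rho> a a)\<bar>" by (subst ds_diag_real) (simp only: norm_of_real)
    then show ?thesis using 2 by (simp add: power2_eq_square)
  next
    case 3
    define z where "z = \<rho> a b"
    define p where "p = Re (\<rho> a a)"
    define q where "q = Re (\<rho> b b)"
    define N where "N = (cmod z)\<^sup>2"
    have pa: "\<rho> a a = of_real p" unfolding p_def by (rule ds_diag_real)
    have qb: "\<rho> b b = of_real q" unfolding q_def by (rule ds_diag_real)
    have ba: "\<rho> b a = cnj z" unfolding z_def by (rule ds_herm)
    have zz: "z * cnj z = of_real N" unfolding N_def complex_norm_square ..
    have p0: "0 \<le> p" "0 \<le> q" unfolding p_def q_def by (rule ds_diag_nonneg)+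
    have quad: "0 \<le> t * t * p - 2 * t * N + N * q" for t :: real
    proof -
      define v :: "nat \<Rightarrow> complex" where "v i = (if i = a then of_real t else if i = b then - cnj z else 0)" for i
      have inner: "(\<Sum>j\<in>S. cnj (v i) * \<rho> i j * v j) = cnj (v i) * \<rho> i a * v a + cnj (v i) * \<rho> i b * v b" for i
        by (rule sum_two[OF fin 3]) (simp add: v_def)
      have "(\<Sum>i\<in>S. \<Sum>j\<in>S. cnj (v i) * \<rho> i j * v j)
          = (cnj (v a) * \<rho> a a * v a + cnj (v a) * \<rho> a b * v b) + (cnj (v b) * \<rho> b a * v a + cnj (v b) * \<rho> b b * v b)"
        unfolding inner by (rule sum_two[OF fin 3]) (simp add: v_def)
      also have "\<dots> = of_real (t * t * p) - of_real t * (z * cnj z) - of_real t * (z * cnj z) + of_real q * (z * cnj z)"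
        using 3(3) by (simp add: v_def pa qb ba z_def[symmetric] algebra_simps)
      also have "\<dots> = of_real (t * t * p - 2 * t * N + N * q)"
        unfolding zz by (simp add: algebra_simps)
      finally show ?thesis using ds_psd[of v] by simp
    qed
    have "N \<le> p * q"
    proof (cases "N = 0")
      case True then show ?thesis using p0 by simp
    next
      case False
      then have Np: "N > 0" unfolding N_def by simp
      show ?thesis
      proof (cases "p = 0")
        case True
        have "0 \<le> (q+1) * (q+1) * p - 2 * (q+1) * N + N * q" by (rule quad)
        then have "0 \<le> - N * (q + 2)" using True by (simp add: algebra_simps)
        moreover have "N * (q + 2) > 0" using Np p0 by simp
        ultimately show ?thesis by linarith
      next
        case False
        then have pp: "p > 0" using p0 by simp
        have "0 \<le> (N/p) * (N/p) * p - 2 * (N/p) * N + N * q" by (rule quad)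
        also have "\<dots> = N * (q - N / p)" using pp by (simp add: field_simps power2_eq_square)
        finally have "0 \<le> q - N / p" using Np by (simp add: zero_le_mult_iff)
        then show ?thesis using pp by (simp add: field_simps)
      qed
    qed
    then show ?thesis unfolding N_def z_def p_def q_def .
  qed
qed

lemma ds_offdiag_le: "cmod (\<rho> a b) \<le> Re (\<rho> a a) + Re (\<rho> b b)"
proof -
  have "(cmod (\<rho> a b))\<^sup>2 \<le> (Re (\<rho> a a) + Re (\<rho> b b))\<^sup>2"
  proof -
    have aux: "p * q \<le> (p + q)\<^sup>2" if "0 \<le> p" "0 \<le> q" for p q :: real
    proof -
      have "0 \<le> p * q" using that by simp
      moreover have "(p + q)\<^sup>2 = p * p + p * q + q * q + p * q" by (simp add: power2_eq_square algebra_simps)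
      moreover have "0 \<le> p * p" "0 \<le> q * q" by simp_all
      ultimately show ?thesis by linarith
    qed
    show ?thesis using ds_offdiag[of a b] aux[OF ds_diag_nonneg[of a] ds_diag_nonneg[of b]] by linarith
  qed
  then show ?thesis
    by (rule power2_le_imp_le) (use ds_diag_nonneg[of a] ds_diag_nonneg[of b] in simp)
qed

end

lemma summable_from_incr:
  fixes P :: "nat \<Rightarrow> real" and x :: "nat \<Rightarrow> real"
  assumes inc: "\<And>k. P (Suc k) \<ge> P k + w * x k" and w: "w > 0" and x0: "\<And>k. x k \<ge> 0"
    and ub: "\<And>k. P k \<le> 1" and lb: "P 0 \<ge> 0"
  shows "summable x"
proof (rule summableI_nonneg_bounded[where x = "1 / w"])
  show "0 \<le> x n" for n by (rule x0)
  have "w * (\<Sum>i<n. x i) \<le> P n - P 0" for n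
  proof (induction n)
    case 0 then show ?case by simp
  next
    case (Suc n) then show ?case using inc[of n] by (simp add: algebra_simps)
  qed
  then have "w * (\<Sum>i<n. x i) \<le> 1" for n using ub[of n] lb by smt
  then show "(\<Sum>i<n. x i) \<le> 1 / w" for n using w by (simp add: field_simps mult.commute)
qed

lemma summable_from_next:
  fixes y x :: "nat \<Rightarrow> real"
  assumes "summable y" and le: "\<And>k. y (Suc k) \<ge> w * x k" and w: "w > 0" and x0: "\<And>k. x k \<ge> 0"
  shows "summable x"
proof (rule summable_comparison_test'[where N = 0])
  show "summable (\<lambda>k. y (Suc k) / w)"
    using assms(1) by (simp add: summable_Suc_iff summable_divide)
  show "norm (x n) \<le> y (Suc n) / w" for n
    using le[of n] x0[of n] w by (simp add: field_simps mult.commute)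
qed

lemma convergent_incr:
  fixes x c :: "nat \<Rightarrow> complex"
  assumes step: "\<And>k. x (Suc k) = x k + c k" and s: "summable (\<lambda>k. norm (c k))"
  shows "convergent x"
proof -
  have xe: "x k = x 0 + (\<Sum>i<k. c i)" for k
    by (induction k) (simp_all add: step)
  have "(\<lambda>k. x 0 + (\<Sum>i<k. c i)) \<longlonglongrightarrow> x 0 + suminf c"
    by (intro tendsto_add tendsto_const summable_LIMSEQ summable_norm_cancel[OF s])
  then show ?thesis unfolding xe[symmetric] convergent_def by blast
qed



lemma main_conv:
  fixes nbar :: nat and \<theta>2 \<phi> :: real and \<rho>0 :: fock_op
  assumes n1: "nbar \<ge> 1"
    and H: "\<forall>m\<in>{1..9 * nbar + 8}. sin (\<theta>2 * sqrt (real m)) \<noteq> 0"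
    and d0: "density_supported {..9 * nbar + 8} \<rho>0"
  shows "\<exists>\<rho>inf. density_supported {nbar, 9 * nbar + 8} \<rho>inf \<and>
               (\<forall>i j. (\<lambda>k. ((Phi nbar \<theta>2 \<phi> ^^ k) \<rho>0) i j) \<longlonglongrightarrow> \<rho>inf i j)"
proof -
  define D where "D = 9 * nbar + 8"
  define n where "n = nbar"
  let ?G = "Gc nbar \<theta>2" and ?E = "Ec nbar \<theta>2" and ?N = "Nc nbar \<theta>2"
  define r where "r k = (Phi nbar \<theta>2 \<phi> ^^ k) \<rho>0" for k
  have rS: "r (Suc k) = Phi nbar \<theta>2 \<phi> (r k)" for k by (simp add: r_def)
  have GD: "?G D = 0" unfolding D_def by (rule Gc_D)
  have fin: "finite {..D}" by simp
  have dens: "density_supported {..D} (r k)" for k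
  proof (induction k)
    case 0 then show ?case using d0 by (simp add: r_def D_def)
  next
    case (Suc k) then show ?case unfolding rS by (rule Phi_density[OF GD])
  qed
  define P where "P k t = Re (r k t t)" for k t
  have P0: "0 \<le> P k t" for k t unfolding P_def by (rule ds_diag_nonneg[OF fin dens])
  have P1: "P k t \<le> 1" for k t unfolding P_def by (rule ds_diag_le1[OF fin dens])
  have Pdiag: "r k t t = of_real (P k t)" for k t unfolding P_def by (rule ds_diag_real[OF fin dens])
  have Poff: "(cmod (r k a b))\<^sup>2 \<le> P k a * P k b" for k a b unfolding P_def by (rule ds_offdiag[OF fin dens])
  have Ple: "cmod (r k a b) \<le> P k a + P k b" for k a b unfolding P_def by (rule ds_offdiag_le[OF fin dens])
  have Pout: "D < t \<Longrightarrow> P k t = 0" for k t unfolding P_def using ds_supp[OF fin dens, of t t k] by simp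
  have Pstep: "P (Suc k) t = (if 0 < t then (?G (t-1))\<^sup>2 * P k (t-1) else 0) + (?E t)\<^sup>2 * P k t + (?N (t+1))\<^sup>2 * P k (t+1)" for k t
  proof -
    have "r (Suc k) t t = (if 0 < t then complex_of_real (?G (t-1)) * r k (t-1) (t-1) * complex_of_real (?G (t-1)) else 0)
       + complex_of_real (?E t) * r k t t * complex_of_real (?E t)
       + complex_of_real (?N (t+1)) * r k (t+1) (t+1) * complex_of_real (?N (t+1))"
      unfolding rS Phi_eq by simp
    then show ?thesis unfolding P_def[of "Suc k"] by (simp add: Pdiag power2_eq_square)
  qed
  have up: "(?G t)\<^sup>2 * P k t \<le> P (Suc k) (Suc t)" for k t
    using Pstep[of k "Suc t"] P0[of k "Suc t"] P0[of k "Suc (Suc t)"] by (simp add: add_nonneg_nonneg)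
  have down: "(?N (Suc t))\<^sup>2 * P k (Suc t) \<le> P (Suc k) t" for k t
  proof -
    have a: "0 \<le> (if 0 < t then (?G (t-1))\<^sup>2 * P k (t-1) else 0)" using P0 by simp
    have b: "0 \<le> (?E t)\<^sup>2 * P k t" using P0 by simp
    show ?thesis using Pstep[of k t] a b by simp
  qed
  have En: "?E n = -1" unfolding n_def by (rule Ec_n)
  have ED: "?E D = -1" unfolding D_def by (rule Ec_D)
  have nstep: "P (Suc k) n = P k n + (?G (n-1))\<^sup>2 * P k (n-1) + (?N (n+1))\<^sup>2 * P k (n+1)" for k
    using Pstep[of k n] n1 En unfolding n_def by simp
  have nD: "n < D" "n + 1 < D" "0 < n" using n1 unfolding D_def n_def by auto
  have Zlow: "Suc d \<le> n \<Longrightarrow> summable (\<lambda>k. P k (n - Suc d))" for d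
  proof (induction d)
    case 0
    have w: "(?G (n-1))\<^sup>2 > 0" using Gc_below[OF H, of "n-1"] nD unfolding n_def by simp
    show ?case
    proof (rule summable_from_incr[where P = "\<lambda>k. P k n" and w = "(?G (n-1))\<^sup>2"])
      show "P k n + (?G (n-1))\<^sup>2 * P k (n - Suc 0) \<le> P (Suc k) n" for k
        using nstep[of k] P0[of k "n+1"] by simp
    qed (use w P0 P1 in auto)
  next
    case (Suc d)
    let ?t = "n - Suc (Suc d)"
    have e: "Suc ?t = n - Suc d" using Suc.prems by simp
    have w: "(?G ?t)\<^sup>2 > 0" using Gc_below[OF H, of ?t] Suc.prems unfolding n_def by simp
    show ?case
    proof (rule summable_from_next[where y = "\<lambda>k. P k (n - Suc d)" and w = "(?G ?t)\<^sup>2"])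
      show "summable (\<lambda>k. P k (n - Suc d))" using Suc by simp
      show "(?G ?t)\<^sup>2 * P k ?t \<le> P (Suc k) (n - Suc d)" for k using up[of ?t k] unfolding e .
    qed (use w P0 in auto)
  qed
  have Zhigh: "n + 1 + d < D \<Longrightarrow> summable (\<lambda>k. P k (n + 1 + d))" for d
  proof (induction d)
    case 0
    have w: "(?N (n+1))\<^sup>2 > 0" using Nc_between[OF H, of "n+1"] nD unfolding n_def D_def by simp
    show ?case
    proof (rule summable_from_incr[where P = "\<lambda>k. P k n" and w = "(?N (n+1))\<^sup>2"])
      show "P k n + (?N (n+1))\<^sup>2 * P k (n + 1 + 0) \<le> P (Suc k) n" for k
        using nstep[of k] P0[of k "n-1"] by simp
    qed (use w P0 P1 in auto)
  next
    case (Suc d)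
    let ?t = "n + 1 + Suc d"
    have e: "?t = Suc (n + 1 + d)" by simp
    have w: "(?N ?t)\<^sup>2 > 0" using Nc_between[OF H, of ?t] Suc.prems unfolding n_def D_def by simp
    show ?case
    proof (rule summable_from_next[where y = "\<lambda>k. P k (n + 1 + d)" and w = "(?N ?t)\<^sup>2"])
      show "summable (\<lambda>k. P k (n + 1 + d))" using Suc by simp
      show "(?N ?t)\<^sup>2 * P k ?t \<le> P (Suc k) (n + 1 + d)" for k using down[of "n + 1 + d" k] unfolding e .
    qed (use w P0 in auto)
  qed
  have Z: "t \<noteq> n \<Longrightarrow> t \<noteq> D \<Longrightarrow> summable (\<lambda>k. P k t)" for t
  proof -
    assume tn: "t \<noteq> n" and tD: "t \<noteq> D"
    consider "D < t" | "t < n" | "n < t" "t < D" using tn tD by linarith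
    then show ?thesis
    proof cases
      case 1 then show ?thesis using Pout by simp
    next
      case 2
      then have "n - Suc (n - t - 1) = t" "Suc (n - t - 1) \<le> n" by auto
      then show ?thesis using Zlow[of "n - t - 1"] by simp
    next
      case 3
      then have "n + 1 + (t - n - 1) = t" by auto
      then show ?thesis using Zhigh[of "t - n - 1"] 3 by simp
    qed
  qed
  have Zlim: "t \<noteq> n \<Longrightarrow> t \<noteq> D \<Longrightarrow> (\<lambda>k. P k t) \<longlonglongrightarrow> 0" for t
    using Z summable_LIMSEQ_zero by blast
  have zero_tend: "(\<lambda>k. r k i j) \<longlonglongrightarrow> 0" if ij: "i \<notin> {n, D} \<or> j \<notin> {n, D}" for i j
  proof -
    obtain t where t: "t \<in> {i, j}" "t \<notin> {n, D}" using ij by blast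
    have le: "cmod (r k i j) \<le> sqrt (P k t)" for k
    proof (rule real_le_rsqrt)
      have "P k i * P k j \<le> P k t"
        using t P0[of k i] P0[of k j] P1[of k i] P1[of k j]
        by (auto intro: mult_left_le_one_le mult_right_le_one_le)
      then show "(cmod (r k i j))\<^sup>2 \<le> P k t" using Poff[of k i j] by linarith
    qed
    have "(\<lambda>k. sqrt (P k t)) \<longlonglongrightarrow> sqrt 0"
      by (rule tendsto_real_sqrt) (use Zlim t in auto)
    then have sq: "(\<lambda>k. sqrt (P k t)) \<longlonglongrightarrow> 0" by simp
    have "(\<lambda>k. cmod (r k i j)) \<longlonglongrightarrow> 0"
      apply (rule tendsto_sandwich[where f = "\<lambda>_. 0" and h = "\<lambda>k. sqrt (P k t)"])
      subgoal by (rule always_eventually) simp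
      subgoal by (rule always_eventually) (simp add: le)
      subgoal by (rule tendsto_const)
      subgoal by (rule sq)
      done
    then show ?thesis by (rule tendsto_norm_zero_cancel)
  qed
  have conv: "convergent (\<lambda>k. r k i j)" for i j
  proof (cases "i \<in> {n, D} \<and> j \<in> {n, D}")
    case False
    then show ?thesis using zero_tend[of i j] convergent_def by blast
  next
    case True
    have EE: "?E i * ?E j = 1" using True En ED by auto
    have nots: "a \<in> {n, D} \<Longrightarrow> a - 1 \<notin> {n, D} \<and> a + 1 \<notin> {n, D}" for a
      using nD unfolding D_def by auto
    define c where "c k = (if 0 < i \<and> 0 < j then complex_of_real (?G (i-1)) * r k (i-1) (j-1) * complex_of_real (?G (j-1)) else 0)
       + complex_of_real (?N (i+1)) * r k (i+1) (j+1) * complex_of_real (?N (j+1))" for k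
    show ?thesis
    proof (rule convergent_incr[where c = c])
      show "r (Suc k) i j = r k i j + c k" for k
      proof -
        have "complex_of_real (?E i) * r k i j * complex_of_real (?E j) = complex_of_real (?E i * ?E j) * r k i j"
          by (simp add: algebra_simps)
        then show ?thesis unfolding rS Phi_eq c_def EE by simp
      qed
      define g where "g k = \<bar>?G (i-1)\<bar> * \<bar>?G (j-1)\<bar> * (P k (i-1) + P k (j-1)) + \<bar>?N (i+1)\<bar> * \<bar>?N (j+1)\<bar> * (P k (i+1) + P k (j+1))" for k
      show "summable (\<lambda>k. norm (c k))"
      proof (rule summable_comparison_test'[where g = g and N = 0])
        show "summable g" unfolding g_def
          using nots True nD
          by (intro summable_add summable_mult Z) auto
        show "norm (norm (c k)) \<le> g k" for k
        proof -
          have a: "norm (if 0 < i \<and> 0 < j then complex_of_real (?G (i-1)) * r k (i-1) (j-1) * complex_of_real (?G (j-1)) else 0)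
              \<le> \<bar>?G (i-1)\<bar> * \<bar>?G (j-1)\<bar> * (P k (i-1) + P k (j-1))"
            using Ple[of k "i-1" "j-1"] P0[of k "i-1"] P0[of k "j-1"]
            by (auto simp: norm_mult intro!: mult_left_mono simp: mult.commute mult.left_commute)
          have b: "norm (complex_of_real (?N (i+1)) * r k (i+1) (j+1) * complex_of_real (?N (j+1)))
              \<le> \<bar>?N (i+1)\<bar> * \<bar>?N (j+1)\<bar> * (P k (i+1) + P k (j+1))"
            using Ple[of k "i+1" "j+1"]
            by (auto simp: norm_mult intro!: mult_left_mono simp: mult.commute mult.left_commute)
          show ?thesis unfolding c_def g_def using norm_triangle_le[OF add_mono[OF a b]] by simp
        qed
      qed
    qed
  qed
  define \<rho>inf where "\<rho>inf i j = lim (\<lambda>k. r k i j)" for i j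
  have lim: "(\<lambda>k. r k i j) \<longlonglongrightarrow> \<rho>inf i j" for i j
    unfolding \<rho>inf_def using conv convergent_LIMSEQ_iff by blast
  have inf0: "i \<notin> {n, D} \<or> j \<notin> {n, D} \<Longrightarrow> \<rho>inf i j = 0" for i j
    using LIMSEQ_unique[OF lim zero_tend] by blast
  have sub: "{n, D} \<subseteq> {..D}" using nD by auto
  have "density_supported {n, D} \<rho>inf"
    unfolding density_supported_def
  proof (intro conjI allI impI)
    show "\<rho>inf i j = 0" if "i \<notin> {n, D} \<or> j \<notin> {n, D}" for i j using inf0 that by blast
    show "\<rho>inf j i = cnj (\<rho>inf i j)" for i j
    proof -
      have "(\<lambda>k. cnj (r k i j)) \<longlonglongrightarrow> cnj (\<rho>inf i j)" by (intro tendsto_cnj lim)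
      moreover have "(\<lambda>k. cnj (r k i j)) = (\<lambda>k. r k j i)"
        using ds_herm[OF fin dens] by metis
      ultimately show ?thesis using LIMSEQ_unique[OF lim] by metis
    qed
    show "0 \<le> Re (\<Sum>i\<in>{n, D}. \<Sum>j\<in>{n, D}. cnj (v i) * \<rho>inf i j * v j)" for v
    proof -
      define v' where "v' i = (if i \<in> {n, D} then v i else 0)" for i
      have red: "(\<Sum>i\<in>{..D}. \<Sum>j\<in>{..D}. cnj (v' i) * X i j * v' j) = (\<Sum>i\<in>{n, D}. \<Sum>j\<in>{n, D}. cnj (v i) * X i j * v j)" for X
      proof -
        have "(\<Sum>i\<in>{..D}. \<Sum>j\<in>{..D}. cnj (v' i) * X i j * v' j) = (\<Sum>i\<in>{n, D}. \<Sum>j\<in>{..D}. cnj (v' i) * X i j * v' j)"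
          by (rule sum.mono_neutral_right) (use sub in \<open>auto simp: v'_def\<close>)
        also have "\<dots> = (\<Sum>i\<in>{n, D}. \<Sum>j\<in>{n, D}. cnj (v' i) * X i j * v' j)"
          by (intro sum.cong refl sum.mono_neutral_right) (use sub in \<open>auto simp: v'_def\<close>)
        also have "\<dots> = (\<Sum>i\<in>{n, D}. \<Sum>j\<in>{n, D}. cnj (v i) * X i j * v j)"
          by (intro sum.cong refl) (auto simp: v'_def)
        finally show ?thesis .
      qed
      have "(\<lambda>k. Re (\<Sum>i\<in>{n, D}. \<Sum>j\<in>{n, D}. cnj (v i) * r k i j * v j))
            \<longlonglongrightarrow> Re (\<Sum>i\<in>{n, D}. \<Sum>j\<in>{n, D}. cnj (v i) * \<rho>inf i j * v j)"
        by (intro tendsto_Re tendsto_sum tendsto_mult tendsto_const lim)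
      moreover have "0 \<le> Re (\<Sum>i\<in>{n, D}. \<Sum>j\<in>{n, D}. cnj (v i) * r k i j * v j)" for k
        using ds_psd[OF fin dens[of k], of v'] unfolding red .
      ultimately show ?thesis by (intro LIMSEQ_le_const) auto
    qed
    show "(\<Sum>i\<in>{n, D}. \<rho>inf i i) = 1"
    proof -
      have "(\<lambda>k. \<Sum>i\<in>{..D}. r k i i) \<longlonglongrightarrow> (\<Sum>i\<in>{..D}. \<rho>inf i i)"
        by (intro tendsto_sum lim)
      moreover have "(\<lambda>k. \<Sum>i\<in>{..D}. r k i i) = (\<lambda>k. 1)"
        using ds_tr[OF fin dens] by simp
      ultimately have "(\<Sum>i\<in>{..D}. \<rho>inf i i) = 1"
        using LIMSEQ_unique tendsto_const by metis
      moreover have "(\<Sum>i\<in>{..D}. \<rho>inf i i) = (\<Sum>i\<in>{n, D}. \<rho>inf i i)"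
        by (rule sum.mono_neutral_right) (use sub inf0 in auto)
      ultimately show ?thesis by simp
    qed
  qed
  then show ?thesis using lim unfolding r_def n_def D_def by blast
qed


theorem mainTheorem3:
  fixes nbar :: nat and \<theta>2 \<phi> :: real
  assumes "nbar \<ge> 1" and "\<theta>2 > 0"
    and "\<forall>n\<in>{1..9 * nbar + 8}. sin (\<theta>2 * sqrt (real n)) \<noteq> 0"
  shows "invariant_sub (9 * nbar + 8) (Mg nbar \<theta>2)
       \<and> invariant_sub (9 * nbar + 8) (Me nbar \<theta>2)
       \<and> invariant_sub (9 * nbar + 8) (Mm nbar \<theta>2 \<phi>)
       \<and> (\<forall>\<rho>0. density_supported {..9 * nbar + 8} \<rho>0 \<longrightarrow>
            (\<exists>\<rho>inf. density_supported {nbar, 9 * nbar + 8} \<rho>inf \<and>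
               (\<forall>i j. (\<lambda>k. ((Phi nbar \<theta>2 \<phi> ^^ k) \<rho>0) i j) \<longlonglongrightarrow> \<rho>inf i j)))"
proof (intro conjI allI impI)
  have GD: "Gc nbar \<theta>2 (9 * nbar + 8) = 0" by (rule Gc_D)
  show "invariant_sub (9 * nbar + 8) (Mg nbar \<theta>2)"
    unfolding invariant_sub_def
  proof (intro allI impI)
    fix i k assume "k \<le> 9 * nbar + 8" "9 * nbar + 8 < i"
    then show "Mg nbar \<theta>2 i k = 0"
    proof (cases "i = k + 1")
      case True
      with \<open>k \<le> 9 * nbar + 8\<close> \<open>9 * nbar + 8 < i\<close> have "k = 9 * nbar + 8" by simp
      have "Mg nbar \<theta>2 i k = complex_of_real (Gc nbar \<theta>2 k)"
        using True unfolding Mg_def Gc_def by simp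
      then show ?thesis using GD \<open>k = 9 * nbar + 8\<close> by simp
    next
      case False then show ?thesis by (simp add: Mg_def)
    qed
  qed
  show "invariant_sub (9 * nbar + 8) (Me nbar \<theta>2)"
    unfolding invariant_sub_def by (auto simp: Me_def)
  show "invariant_sub (9 * nbar + 8) (Mm nbar \<theta>2 \<phi>)"
    unfolding invariant_sub_def by (auto simp: Mm_def)
  fix \<rho>0 assume "density_supported {..9 * nbar + 8} \<rho>0"
  then show "\<exists>\<rho>inf. density_supported {nbar, 9 * nbar + 8} \<rho>inf \<and>
               (\<forall>i j. (\<lambda>k. ((Phi nbar \<theta>2 \<phi> ^^ k) \<rho>0) i j) \<longlonglongrightarrow> \<rho>inf i j)"
    by (rule main_conv[OF assms(1) assms(3)])
qed

end
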